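(* Let $A\in\mathbb{R}^{m\times n}$, $b\in\mathbb{R}^m$, $f(x)=\frac12\|Ax-b\|^2$, and let $x^k,x^{k-1}\in\mathbb{R}^n$ with $\nabla f(x^k)\neq 0$ and $x^k\neq x^{k-1}$. Let $g=\nabla f(x^k)/\|\nabla f(x^k)\|$, $d=(x^k-x^{k-1})/\|x^k-x^{k-1}\|$, $\epsilon=g^td$, and assume $\epsilon^2<1$. Let $S_{11}=g^tA^tAg$, $S_{12}=g^tA^tAd$, $S_{22}=d^tA^tAd$, $\eta_1=1-\epsilon^2$, $\eta_2=-S_{11}-S_{22}+2\epsilon S_{12}$, $\eta_3=S_{11}S_{22}-S_{12}^2$, and $$\sigma=\frac{-\eta_2+\sqrt{\eta_2^2-4\eta_1\eta_3}}{2\eta_1}.$$ Then $\sigma\ge S_{11}$ and $\sigma\ge S_{22}$; consequently the linear system $$\begin{pmatrix}1&\epsilon\\ \epsilon&1\end{pmatrix}\begin{pmatrix}\tau\\ \rho\end{pmatrix}=\begin{pmatrix}\sqrt{\sigma-S_{11}}\\ \sqrt{\sigma-S_{22}}\,\mathrm{sgn}(\epsilon\sigma-S_{12})\end{pmatrix}$$ has a real solution $(\tau,\rho)$, so that $u=\tau g+\rho d$ exists.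
   Context: $\|\cdot\|$ denotes the Euclidean norm; $\mathrm{sgn}$ is the sign function. The discriminant $\eta_2^2-4\eta_1\eta_3$ is nonnegative under these assumptions, so $\sigma$ is a real number (the larger root of $\eta_1\sigma^2+\eta_2\sigma+\eta_3=0$). *)

theory Defs
  imports "HOL-Analysis.Analysis"
begin

end

theory Submission
  imports Defs
begin

lemma root_ge:
  fixes e s11 s12 s22 x :: real
  assumes e: "e^2 < 1" and x: "x = s11 \<or> x = s22"
  shows "x \<le> (- (- s11 - s22 + 2 * e * s12) + sqrt ((- s11 - s22 + 2 * e * s12)\<^sup>2
            - 4 * (1 - e^2) * (s11 * s22 - s12\<^sup>2))) / (2 * (1 - e^2))"
proof -
  define h1 where "h1 = 1 - e^2"
  define h2 where "h2 = - s11 - s22 + 2 * e * s12"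
  define h3 where "h3 = s11 * s22 - s12\<^sup>2"
  define D where "D = h2^2 - 4*h1*h3"
  have h1p: "h1 > 0" using e h1_def by simp
  have px: "h1*x^2 + h2*x + h3 \<le> 0"
  proof -
    have "h1*x^2 + h2*x + h3 + (e*x - s12)^2 = 0"
      using x unfolding h1_def h2_def h3_def by (auto simp: power2_eq_square algebra_simps)
    thus ?thesis by (smt (verit) zero_le_power2)
  qed
  have DD: "D = (2*h1*x + h2)^2 - 4*h1*(h1*x^2 + h2*x + h3)"
    unfolding D_def by (simp add: power2_eq_square algebra_simps)
  have "(2*h1*x + h2)^2 \<le> D" using DD px h1p
    by (smt (verit) mult_pos_neg mult_pos_pos zero_less_mult_iff)
  hence "\<bar>2*h1*x + h2\<bar> \<le> sqrt D" using real_le_rsqrt real_sqrt_abs by (metis real_sqrt_le_mono)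
  hence "2*h1*x \<le> - h2 + sqrt D" by linarith
  hence "x \<le> (- h2 + sqrt D) / (2*h1)" using h1p by (simp add: field_simps)
  thus ?thesis unfolding D_def h1_def h2_def h3_def .
qed

theorem claim2:
  fixes A :: "real ^ 'n ^ 'm" and b :: "real ^ 'm"
    and xk xk1 gradf :: "real ^ 'n"
    and f :: "real ^ 'n \<Rightarrow> real"
  assumes f_def: "f = (\<lambda>x. (1/2) * (norm (A *v x - b))\<^sup>2)"
    and grad: "GDERIV f xk :> gradf"
    and gnz: "gradf \<noteq> 0"
    and xne: "xk \<noteq> xk1"
  defines "g \<equiv> (1 / norm gradf) *\<^sub>R gradf"
    and "d \<equiv> (1 / norm (xk - xk1)) *\<^sub>R (xk - xk1)"
  defines "\<epsilon> \<equiv> g \<bullet> d"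
  assumes eps: "\<epsilon>\<^sup>2 < 1"
  defines "S11 \<equiv> g \<bullet> ((transpose A ** A) *v g)"
    and "S12 \<equiv> g \<bullet> ((transpose A ** A) *v d)"
    and "S22 \<equiv> d \<bullet> ((transpose A ** A) *v d)"
  defines "\<eta>1 \<equiv> 1 - \<epsilon>\<^sup>2"
    and "\<eta>2 \<equiv> - S11 - S22 + 2 * \<epsilon> * S12"
    and "\<eta>3 \<equiv> S11 * S22 - S12\<^sup>2"
  defines "\<sigma> \<equiv> (- \<eta>2 + sqrt (\<eta>2\<^sup>2 - 4 * \<eta>1 * \<eta>3)) / (2 * \<eta>1)"
  shows "\<sigma> \<ge> S11 \<and> \<sigma> \<ge> S22 \<and>
    (\<exists>\<tau> \<rho>. \<tau> + \<epsilon> * \<rho> = sqrt (\<sigma> - S11) \<and>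
            \<epsilon> * \<tau> + \<rho> = sqrt (\<sigma> - S22) * sgn (\<epsilon> * \<sigma> - S12))"
proof (intro conjI)
  show "\<sigma> \<ge> S11" unfolding \<sigma>_def \<eta>1_def \<eta>2_def \<eta>3_def
    using root_ge[OF eps] by blast
  show "\<sigma> \<ge> S22" unfolding \<sigma>_def \<eta>1_def \<eta>2_def \<eta>3_def
    using root_ge[OF eps] by blast
  define a where "a = sqrt (\<sigma> - S11)"
  define c where "c = sqrt (\<sigma> - S22) * sgn (\<epsilon> * \<sigma> - S12)"
  have h: "1 - \<epsilon>^2 \<noteq> 0" using eps by simp
  show "\<exists>\<tau> \<rho>. \<tau> + \<epsilon> * \<rho> = sqrt (\<sigma> - S11) \<and>
            \<epsilon> * \<tau> + \<rho> = sqrt (\<sigma> - S22) * sgn (\<epsilon> * \<sigma> - S12)"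
  proof (intro exI conjI)
    show "(a - \<epsilon>*c)/(1-\<epsilon>^2) + \<epsilon> * ((c - \<epsilon>*a)/(1-\<epsilon>^2)) = sqrt (\<sigma> - S11)"
      proof -
        have "(a - \<epsilon>*c)/(1-\<epsilon>^2) + \<epsilon> * ((c - \<epsilon>*a)/(1-\<epsilon>^2)) = (a - \<epsilon>*c + \<epsilon>*(c - \<epsilon>*a))/(1-\<epsilon>^2)"
          by (simp add: add_divide_distrib)
        also have "a - \<epsilon>*c + \<epsilon>*(c - \<epsilon>*a) = a*(1-\<epsilon>^2)" by (simp add: algebra_simps power2_eq_square)
        finally show ?thesis using h a_def by simp
      qed
    show "\<epsilon> * ((a - \<epsilon>*c)/(1-\<epsilon>^2)) + (c - \<epsilon>*a)/(1-\<epsilon>^2) = sqrt (\<sigma> - S22) * sgn (\<epsilon> * \<sigma> - S12)"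
      proof -
        have "\<epsilon> * ((a - \<epsilon>*c)/(1-\<epsilon>^2)) + (c - \<epsilon>*a)/(1-\<epsilon>^2) = (\<epsilon>*(a - \<epsilon>*c) + (c - \<epsilon>*a))/(1-\<epsilon>^2)"
          by (simp add: add_divide_distrib)
        also have "\<epsilon>*(a - \<epsilon>*c) + (c - \<epsilon>*a) = c*(1-\<epsilon>^2)" by (simp add: algebra_simps power2_eq_square)
        finally show ?thesis using h c_def by simp
      qed
  qed
qed

end
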